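(* For any diagonal section $\delta$ and any $x_0\in[0,1]$, $$\max_{y\in[x_0,1]}\big(\overline{C}_\delta(x_0,y)-B_\delta(x_0,y)\big)=\overline{C}_\delta(x_0,g^\delta_U(x_0))-B_\delta(x_0,g^\delta_U(x_0))=\min_{t\in[x_0,g^\delta_U(x_0)]}\widehat{\delta}(t).$$
   Context: $\mathbb{I}=[0,1]$. A (bivariate) copula is a function $C\colon\mathbb{I}^2\to\mathbb{I}$ with $C(x,0)=C(0,y)=0$, $C(x,1)=x$, $C(1,y)=y$, and $C(b,d)+C(a,c)-C(b,c)-C(a,d)\ge 0$ for all $a\le b$, $c\le d$. A quasi-copula satisfies the same boundary conditions and is increasing and 1-Lipschitz in each variable. A diagonal section is $\delta\colon\mathbb{I}\to\mathbb{I}$ with $\delta(x)\le x$, $0\le\delta(y)-\delta(x)\le 2(y-x)$ for $x\le y$, $\delta(1)=1$; $\widehat{\delta}(x)=x-\delta(x)$. $\overline{C}_\delta(x,y)=\sup\{C(x,y): C\text{ copula with } C(t,t)=\delta(t)\ \forall t\}$, $B_\delta(x,y)=\inf\{Q(x,y): Q\text{ quasi-copula with } Q(t,t)=\delta(t)\ \forall t\}$. For $x\le y$ let $\mathrm{TV}_x^y(\widehat{\delta})$ be the total variation of $\widehat{\delta}$ on $[x,y]$, and for $y<x$ set $\mathrm{TV}_x^y=-\mathrm{TV}_y^x$. Let $f^\delta(x,y)=y-\frac12(\widehat{\delta}(x)+\widehat{\delta}(y)+\mathrm{TV}_x^y(\widehat{\delta}))$, $D_f^\circ(\delta)=\{(x,y)\in\mathbb{I}^2: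 f^\delta(x,y)<\min\{x,y\}\}$, $D_f(\delta)=\overline{D_f^\circ(\delta)}\cup\{(x,x):x\in\mathbb{I}\}$, and $g^\delta_U(x)=\max\{y\in\mathbb{I}:(x,y)\in D_f(\delta)\}$. *)

theory Defs
  imports "HOL-Analysis.Analysis"
begin

definition copula :: "(real \<Rightarrow> real \<Rightarrow> real) \<Rightarrow> bool" where
  "copula C \<longleftrightarrow>
     (\<forall>x\<in>{0..1}. \<forall>y\<in>{0..1}. C x y \<in> {0..1}) \<and>
     (\<forall>x\<in>{0..1}. C x 0 = 0 \<and> C 0 x = 0 \<and> C x 1 = x \<and> C 1 x = x) \<and>
     (\<forall>a\<in>{0..1}. \<forall>b\<in>{0..1}. \<forall>c\<in>{0..1}. \<forall>d\<in>{0..1}.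
        a \<le> b \<longrightarrow> c \<le> d \<longrightarrow> C b d + C a c - C b c - C a d \<ge> 0)"

definition quasi_copula :: "(real \<Rightarrow> real \<Rightarrow> real) \<Rightarrow> bool" where
  "quasi_copula Q \<longleftrightarrow>
     (\<forall>x\<in>{0..1}. \<forall>y\<in>{0..1}. Q x y \<in> {0..1}) \<and>
     (\<forall>x\<in>{0..1}. Q x 0 = 0 \<and> Q 0 x = 0 \<and> Q x 1 = x \<and> Q 1 x = x) \<and>
     (\<forall>x1\<in>{0..1}. \<forall>x2\<in>{0..1}. \<forall>y\<in>{0..1}. x1 \<le> x2 \<longrightarrow>
        Q x1 y \<le> Q x2 y \<and> Q x2 y - Q x1 y \<le> x2 - x1 \<and>
        Q y x1 \<le> Q y x2 \<and> Q y x2 - Q y x1 \<le> x2 - x1)"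

definition diagonal_section :: "(real \<Rightarrow> real) \<Rightarrow> bool" where
  "diagonal_section \<delta> \<longleftrightarrow>
     (\<forall>x\<in>{0..1}. \<delta> x \<in> {0..1} \<and> \<delta> x \<le> x) \<and>
     (\<forall>x\<in>{0..1}. \<forall>y\<in>{0..1}. x \<le> y \<longrightarrow> 0 \<le> \<delta> y - \<delta> x \<and> \<delta> y - \<delta> x \<le> 2 * (y - x)) \<and>
     \<delta> 1 = 1"

definition delta_hat :: "(real \<Rightarrow> real) \<Rightarrow> real \<Rightarrow> real" where
  "delta_hat \<delta> x = x - \<delta> x"

definition upper_copula :: "(real \<Rightarrow> real) \<Rightarrow> real \<Rightarrow> real \<Rightarrow> real" where
  "upper_copula \<delta> x y =
     Sup {C x y | C. copula C \<and> (\<forall>t\<in>{0..1}. C t t = \<delta> t)}"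

definition lower_qcopula :: "(real \<Rightarrow> real) \<Rightarrow> real \<Rightarrow> real \<Rightarrow> real" where
  "lower_qcopula \<delta> x y =
     Inf {Q x y | Q. quasi_copula Q \<and> (\<forall>t\<in>{0..1}. Q t t = \<delta> t)}"

definition total_variation :: "(real \<Rightarrow> real) \<Rightarrow> real \<Rightarrow> real \<Rightarrow> real" where
  "total_variation h a b =
     Sup {(\<Sum>i<n. \<bar>h (t (Suc i)) - h (t i)\<bar>) | t n.
            t 0 = a \<and> t n = b \<and> (\<forall>i<n. t i \<le> t (Suc i))}"

definition TV :: "(real \<Rightarrow> real) \<Rightarrow> real \<Rightarrow> real \<Rightarrow> real" where
  "TV h x y = (if x \<le> y then total_variation h x y else - total_variation h y x)"

definition f_delta :: "(real \<Rightarrow> real) \<Rightarrow> real \<Rightarrow> real \<Rightarrow> real" where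
  "f_delta \<delta> x y = y - (delta_hat \<delta> x + delta_hat \<delta> y + TV (delta_hat \<delta>) x y) / 2"

definition Df_open :: "(real \<Rightarrow> real) \<Rightarrow> (real \<times> real) set" where
  "Df_open \<delta> = {(x, y). x \<in> {0..1} \<and> y \<in> {0..1} \<and> f_delta \<delta> x y < min x y}"

definition Df :: "(real \<Rightarrow> real) \<Rightarrow> (real \<times> real) set" where
  "Df \<delta> = closure (Df_open \<delta>) \<union> {(x, x) | x. x \<in> {0..1}}"

definition gU :: "(real \<Rightarrow> real) \<Rightarrow> real \<Rightarrow> real" where
  "gU \<delta> x = (GREATEST y. y \<in> {0..1} \<and> (x, y) \<in> Df \<delta>)"

end

theory Submission
  imports Defs
begin

definition part :: "real \<Rightarrow> real \<Rightarrow> (nat \<Rightarrow> real) \<Rightarrow> nat \<Rightarrow> bool" where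
  "part a b t n \<longleftrightarrow> t 0 = a \<and> t n = b \<and> (\<forall>i<n. t i \<le> t (Suc i))"

definition psum :: "(real \<Rightarrow> real) \<Rightarrow> (real \<Rightarrow> real) \<Rightarrow> (nat \<Rightarrow> real) \<Rightarrow> nat \<Rightarrow> real" where
  "psum G h t n = (\<Sum>i<n. G (h (t (Suc i)) - h (t i)))"

definition vsup :: "(real \<Rightarrow> real) \<Rightarrow> (real \<Rightarrow> real) \<Rightarrow> real \<Rightarrow> real \<Rightarrow> real" where
  "vsup G h a b = Sup {psum G h t n | t n. part a b t n}"

definition lipI :: "(real \<Rightarrow> real) \<Rightarrow> bool" where
  "lipI h \<longleftrightarrow> (\<forall>u\<in>{0..1}. \<forall>v\<in>{0..1}. \<bar>h u - h v\<bar> \<le> \<bar>u - v\<bar>)"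

lemma tv_eq: "total_variation h a b = vsup abs h a b"
  unfolding total_variation_def vsup_def psum_def part_def by simp

lemma part_mono: assumes "part a b t n" "i \<le> j" "j \<le> n" shows "t i \<le> t j"
  using assms(2,3)
proof (induction j)
  case 0 then show ?case by simp
next
  case (Suc j)
  show ?case
  proof (cases "i = Suc j")
    case True then show ?thesis by simp
  next
    case False
    then have "i \<le> j" using Suc by simp
    then have "t i \<le> t j" using Suc by simp
    also have "t j \<le> t (Suc j)" using assms(1) Suc unfolding part_def by simp
    finally show ?thesis .
  qed
qed

lemma part_range: assumes "part a b t n" "i \<le> n" shows "a \<le> t i" "t i \<le> b"
  using part_mono[OF assms(1), of 0 i] part_mono[OF assms(1), of i n] assms
  unfolding part_def by auto

lemma psum_tele:
  assumes "\<And>i. i < n \<Longrightarrow> G (h (t (Suc i)) - h (t i)) \<le> F (t (Suc i)) - F (t i)"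
  shows "psum G h t n \<le> F (t n) - F (t 0)"
proof -
  have "psum G h t n \<le> (\<Sum>i<n. F (t (Suc i)) - F (t i))"
    unfolding psum_def by (rule sum_mono) (use assms in auto)
  also have "\<dots> = F (t n) - F (t 0)" by (rule sum_lessThan_telescope)
  finally show ?thesis .
qed

lemma lipD: "lipI h \<Longrightarrow> u \<in> {0..1} \<Longrightarrow> v \<in> {0..1} \<Longrightarrow> \<bar>h u - h v\<bar> \<le> \<bar>u - v\<bar>"
  unfolding lipI_def by blast

lemma psum_bound:
  assumes lip: "lipI h" and G: "\<And>x. G x \<le> \<bar>x\<bar>" and p: "part a b t n" and "0 \<le> a" "b \<le> 1"
  shows "psum G h t n \<le> b - a"
proof -
  have "psum G h t n \<le> (\<lambda>u. u) (t n) - (\<lambda>u. u) (t 0)"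
  proof (rule psum_tele)
    fix i assume i: "i < n"
    have r: "t i \<in> {0..1}" "t (Suc i) \<in> {0..1}" "t i \<le> t (Suc i)"
      using part_range[OF p, of i] part_range[OF p, of "Suc i"] i assms p unfolding part_def by auto
    have "G (h (t (Suc i)) - h (t i)) \<le> \<bar>h (t (Suc i)) - h (t i)\<bar>" by (rule G)
    also have "\<dots> \<le> \<bar>t (Suc i) - t i\<bar>" using lipD[OF lip r(2) r(1)] .
    finally show "G (h (t (Suc i)) - h (t i)) \<le> t (Suc i) - t i" using r by simp
  qed
  then show ?thesis using p unfolding part_def by simp
qed

lemma psum_pos_bound:
  assumes lip: "lipI h" and p: "part a b t n" and "0 \<le> a" "b \<le> 1"
  shows "psum (\<lambda>x. max 0 x) h t n \<le> (b - a + h b - h a) / 2"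
proof -
  have "psum (\<lambda>x. max 0 x) h t n \<le> (\<lambda>u. (u + h u)/2) (t n) - (\<lambda>u. (u + h u)/2) (t 0)"
  proof (rule psum_tele)
    fix i assume i: "i < n"
    have r: "t i \<in> {0..1}" "t (Suc i) \<in> {0..1}" "t i \<le> t (Suc i)"
      using part_range[OF p, of i] part_range[OF p, of "Suc i"] i assms p unfolding part_def by auto
    have "\<bar>h (t (Suc i)) - h (t i)\<bar> \<le> \<bar>t (Suc i) - t i\<bar>" using lipD[OF lip r(2) r(1)] .
    then show "max 0 (h (t (Suc i)) - h (t i)) \<le> (t (Suc i) + h (t (Suc i)))/2 - (t i + h (t i))/2"
      using r by (auto simp: abs_le_iff max_def field_simps)
  qed
  then show ?thesis using p unfolding part_def by (simp add: field_simps)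
qed

lemma psum_pos_abs:
  assumes "part a b t n"
  shows "psum (\<lambda>x. max 0 x) h t n = (psum abs h t n + h b - h a) / 2"
proof -
  have e: "\<And>x::real. max 0 x = (\<bar>x\<bar> + x) / 2" by auto
  have "psum (\<lambda>x. max 0 x) h t n = (\<Sum>i<n. (\<bar>h (t (Suc i)) - h (t i)\<bar> + (h (t (Suc i)) - h (t i))) / 2)"
    unfolding psum_def by (simp add: e)
  also have "\<dots> = (psum abs h t n + (\<Sum>i<n. h (t (Suc i)) - h (t i))) / 2"
    unfolding psum_def by (simp add: sum_divide_distrib[symmetric] sum.distrib)
  also have "(\<Sum>i<n. h (t (Suc i)) - h (t i)) = h (t n) - h (t 0)" by (rule sum_lessThan_telescope)
  finally show ?thesis using assms unfolding part_def by simp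
qed

lemma part_ex: "a \<le> b \<Longrightarrow> part a b (\<lambda>i. if i = 0 then a else b) 1"
  unfolding part_def by auto

lemma vsup_bdd:
  assumes "lipI h" "\<And>x. G x \<le> \<bar>x\<bar>" "0 \<le> a" "b \<le> 1"
  shows "bdd_above {psum G h t n | t n. part a b t n}"
  using psum_bound[OF assms(1,2) _ assms(3,4)] by (auto intro!: bdd_aboveI[of _ "b - a"])

lemma vsup_upper:
  assumes "lipI h" "\<And>x. G x \<le> \<bar>x\<bar>" "0 \<le> a" "b \<le> 1" "part a b t n"
  shows "psum G h t n \<le> vsup G h a b"
  unfolding vsup_def by (rule cSup_upper) (use assms vsup_bdd[OF assms(1-4)] in auto)

lemma vsup_least:
  assumes "a \<le> b" "\<And>t n. part a b t n \<Longrightarrow> psum G h t n \<le> M"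
  shows "vsup G h a b \<le> M"
  unfolding vsup_def by (rule cSup_least) (use assms part_ex[OF assms(1)] in auto)

lemma vsup_le_len:
  assumes "lipI h" "\<And>x. G x \<le> \<bar>x\<bar>" "0 \<le> a" "a \<le> b" "b \<le> 1"
  shows "vsup G h a b \<le> b - a"
  by (rule vsup_least) (use assms psum_bound[OF assms(1,2)] in auto)

lemma vsup_nonneg:
  assumes "lipI h" "\<And>x. G x \<le> \<bar>x\<bar>" "\<And>x. 0 \<le> G x" "0 \<le> a" "a \<le> b" "b \<le> 1"
  shows "0 \<le> vsup G h a b"
proof -
  have "0 \<le> psum G h (\<lambda>i. if i = 0 then a else b) 1" unfolding psum_def using assms(3) by simp
  also have "\<dots> \<le> vsup G h a b" by (rule vsup_upper) (use assms part_ex in auto)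
  finally show ?thesis .
qed

lemma part_min: "part a b t n \<Longrightarrow> a \<le> c \<Longrightarrow> c \<le> b \<Longrightarrow> part a c (\<lambda>i. min (t i) c) n"
  unfolding part_def by (auto simp: min_def)

lemma part_max: "part a b t n \<Longrightarrow> a \<le> c \<Longrightarrow> c \<le> b \<Longrightarrow> part c b (\<lambda>i. max (t i) c) n"
  unfolding part_def by (auto simp: max_def)

lemma psum_split:
  assumes sub: "\<And>x y. G (x + y) \<le> G x + G y" and G0: "G 0 = 0" and p: "part a b t n"
  shows "psum G h t n \<le> psum G h (\<lambda>i. min (t i) c) n + psum G h (\<lambda>i. max (t i) c) n"
proof -
  have "psum G h t n \<le> (\<Sum>i<n. G (h (min (t (Suc i)) c) - h (min (t i) c)) + G (h (max (t (Suc i)) c) - h (max (t i) c)))"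
    unfolding psum_def
  proof (rule sum_mono)
    fix i assume "i \<in> {..<n}"
    then have le: "t i \<le> t (Suc i)" using p unfolding part_def by auto
    consider "t (Suc i) \<le> c" | "c \<le> t i" | "t i \<le> c" "c \<le> t (Suc i)" by linarith
    then show "G (h (t (Suc i)) - h (t i)) \<le> G (h (min (t (Suc i)) c) - h (min (t i) c)) + G (h (max (t (Suc i)) c) - h (max (t i) c))"
    proof cases
      case 1 then show ?thesis using le G0 by (simp add: min_def max_def)
    next
      case 2 then show ?thesis using le G0 by (simp add: min_def max_def)
    next
      case 3
      have "G (h (t (Suc i)) - h (t i)) = G ((h c - h (t i)) + (h (t (Suc i)) - h c))" by simp
      also have "\<dots> \<le> G (h c - h (t i)) + G (h (t (Suc i)) - h c)" by (rule sub)
      finally show ?thesis using 3 G0 by (simp add: min_def max_def)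
    qed
  qed
  also have "\<dots> = psum G h (\<lambda>i. min (t i) c) n + psum G h (\<lambda>i. max (t i) c) n"
    unfolding psum_def by (simp add: sum.distrib)
  finally show ?thesis .
qed

lemma vsup_split:
  assumes lip: "lipI h" and G: "\<And>x. G x \<le> \<bar>x\<bar>" and sub: "\<And>x y. G (x + y) \<le> G x + G y" and G0: "G 0 = 0"
    and "0 \<le> a" "a \<le> c" "c \<le> b" "b \<le> 1"
  shows "vsup G h a b \<le> vsup G h a c + vsup G h c b"
proof (rule vsup_least)
  show "a \<le> b" using assms by simp
  fix t n assume p: "part a b t n"
  have "psum G h t n \<le> psum G h (\<lambda>i. min (t i) c) n + psum G h (\<lambda>i. max (t i) c) n"
    by (rule psum_split[OF sub G0 p])
  also have "\<dots> \<le> vsup G h a c + vsup G h c b"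
    apply (rule add_mono)
    apply (rule vsup_upper[OF lip G]) using assms part_min[OF p] apply auto[3]
    apply (rule vsup_upper[OF lip G]) using assms part_max[OF p] apply auto
    done
  finally show "psum G h t n \<le> vsup G h a c + vsup G h c b" .
qed

lemma part_append:
  assumes "part a b t n" "b \<le> v"
  shows "part a v (t(Suc n := v)) (Suc n)"
    "psum G h (t(Suc n := v)) (Suc n) = psum G h t n + G (h v - h b)"
  using assms unfolding part_def psum_def by auto

lemma part_prepend:
  assumes "part a b t n" "u \<le> a"
  shows "part u b (\<lambda>i. if i = 0 then u else t (i - 1)) (Suc n)"
    "psum G h (\<lambda>i. if i = 0 then u else t (i - 1)) (Suc n) = G (h a - h u) + psum G h t n"
proof -
  show "part u b (\<lambda>i. if i = 0 then u else t (i - 1)) (Suc n)"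
    using assms unfolding part_def
    by (auto simp: less_Suc_eq_0_disj)
  show "psum G h (\<lambda>i. if i = 0 then u else t (i - 1)) (Suc n) = G (h a - h u) + psum G h t n"
    unfolding psum_def apply (subst sum.lessThan_Suc_shift) using assms unfolding part_def by simp
qed

lemma vsup_mono:
  assumes lip: "lipI h" and G: "\<And>x. G x \<le> \<bar>x\<bar>" and Gn: "\<And>x. 0 \<le> G x"
    and "0 \<le> a" "a \<le> c" "c \<le> d" "d \<le> b" "b \<le> 1"
  shows "vsup G h c d \<le> vsup G h a b"
proof (rule vsup_least)
  show "c \<le> d" by fact
  fix t n assume p: "part c d t n"
  define t1 where "t1 = (\<lambda>i. if i = 0 then a else t (i - 1))"
  have p1: "part a d t1 (Suc n)" and s1: "psum G h t1 (Suc n) = G (h c - h a) + psum G h t n"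
    unfolding t1_def using part_prepend[OF p, of a] assms by auto
  have p2: "part a b (t1(Suc (Suc n) := b)) (Suc (Suc n))"
    and s2: "psum G h (t1(Suc (Suc n) := b)) (Suc (Suc n)) = psum G h t1 (Suc n) + G (h b - h d)"
    using part_append[OF p1, of b] assms by auto
  have "psum G h t n \<le> psum G h (t1(Suc (Suc n) := b)) (Suc (Suc n))"
    using s1 s2 Gn[of "h c - h a"] Gn[of "h b - h d"] by linarith
  also have "\<dots> \<le> vsup G h a b" by (rule vsup_upper[OF lip G]) (use assms p2 in auto)
  finally show "psum G h t n \<le> vsup G h a b" .
qed

lemma vsup_append:
  assumes lip: "lipI h" and G: "\<And>x. G x \<le> \<bar>x\<bar>"
    and "0 \<le> a" "a \<le> s" "s \<le> t" "t \<le> 1"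
  shows "vsup G h a s + G (h t - h s) \<le> vsup G h a t"
proof -
  have "vsup G h a s \<le> vsup G h a t - G (h t - h s)"
  proof (rule vsup_least)
    show "a \<le> s" by fact
    fix r n assume p: "part a s r n"
    have "psum G h r n + G (h t - h s) = psum G h (r(Suc n := t)) (Suc n)"
      using part_append[OF p, of t] assms by simp
    also have "\<dots> \<le> vsup G h a t"
      by (rule vsup_upper[OF lip G]) (use assms part_append[OF p, of t] in auto)
    finally show "psum G h r n \<le> vsup G h a t - G (h t - h s)" by simp
  qed
  then show ?thesis by simp
qed

lemma G_max: "\<And>x::real. max 0 x \<le> \<bar>x\<bar>" "\<And>x::real. 0 \<le> max 0 x"
  "\<And>x y::real. max 0 (x + y) \<le> max 0 x + max 0 y" "max 0 (0::real) = 0"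
  by auto

lemma G_abs: "\<And>x::real. \<bar>x\<bar> \<le> \<bar>x\<bar>" "\<And>x::real. 0 \<le> \<bar>x\<bar>"
  "\<And>x y::real. \<bar>x + y\<bar> \<le> \<bar>x\<bar> + \<bar>y\<bar>" "\<bar>0::real\<bar> = 0"
  by (auto simp: abs_triangle_ineq)

lemma ds_props:
  assumes "diagonal_section \<delta>"
  shows "\<And>x. x \<in> {0..1} \<Longrightarrow> 0 \<le> \<delta> x \<and> \<delta> x \<le> x"
    "\<And>x y. x \<in> {0..1} \<Longrightarrow> y \<in> {0..1} \<Longrightarrow> x \<le> y \<Longrightarrow> 0 \<le> \<delta> y - \<delta> x \<and> \<delta> y - \<delta> x \<le> 2 * (y - x)"
    "\<delta> 1 = 1"
  using assms unfolding diagonal_section_def by auto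

lemma h_props:
  assumes ds: "diagonal_section \<delta>"
  defines "h \<equiv> delta_hat \<delta>"
  shows "lipI h" "h 0 = 0" "h 1 = 0" "\<And>x. x \<in> {0..1} \<Longrightarrow> 0 \<le> h x \<and> h x \<le> x \<and> h x \<le> 1 - x"
proof -
  note d = ds_props[OF ds]
  show "lipI h" unfolding lipI_def
  proof (intro ballI)
    fix u v :: real assume uv: "u \<in> {0..1}" "v \<in> {0..1}"
    show "\<bar>h u - h v\<bar> \<le> \<bar>u - v\<bar>"
    proof (cases "u \<le> v")
      case True then show ?thesis using d(2)[OF uv True] unfolding h_def delta_hat_def by auto
    next
      case False then show ?thesis using d(2)[OF uv(2,1)] unfolding h_def delta_hat_def by auto
    qed
  qed
  show "h 0 = 0" using d(1)[of 0] unfolding h_def delta_hat_def by auto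
  show "h 1 = 0" using d(3) unfolding h_def delta_hat_def by auto
  fix x :: real assume x: "x \<in> {0..1}"
  show "0 \<le> h x \<and> h x \<le> x \<and> h x \<le> 1 - x"
    using d(1)[OF x] d(2)[OF x, of 1] d(3) x unfolding h_def delta_hat_def by auto
qed

definition pp :: "(real \<Rightarrow> real) \<Rightarrow> real \<Rightarrow> real" where
  "pp \<delta> t = vsup (\<lambda>x. max 0 x) (delta_hat \<delta>) 0 t"

lemma pp_props:
  assumes ds: "diagonal_section \<delta>" and st: "0 \<le> s" "s \<le> t" "t \<le> 1"
  defines "h \<equiv> delta_hat \<delta>"
  shows "pp \<delta> s \<le> pp \<delta> t" "pp \<delta> s + h t - h s \<le> pp \<delta> t"
    "pp \<delta> t \<le> pp \<delta> s + (t - s + h t - h s) / 2" "\<bar>h t - h s\<bar> \<le> t - s"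
proof -
  have lip: "lipI h" using h_props[OF ds] h_def by simp
  have ap: "pp \<delta> s + max 0 (h t - h s) \<le> pp \<delta> t"
    unfolding pp_def h_def[symmetric] by (rule vsup_append[OF lip G_max(1)]) (use st in auto)
  then show "pp \<delta> s \<le> pp \<delta> t" "pp \<delta> s + h t - h s \<le> pp \<delta> t" by auto
  have "pp \<delta> t \<le> pp \<delta> s + vsup (\<lambda>x. max 0 x) h s t"
    unfolding pp_def h_def[symmetric] by (rule vsup_split[OF lip G_max(1,3,4)]) (use st in auto)
  also have "vsup (\<lambda>x. max 0 x) h s t \<le> (t - s + h t - h s) / 2"
    by (rule vsup_least) (use st psum_pos_bound[OF lip] in auto)
  finally show "pp \<delta> t \<le> pp \<delta> s + (t - s + h t - h s) / 2" by simp
  show "\<bar>h t - h s\<bar> \<le> t - s" using lipD[OF lip, of t s] st by auto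
qed

lemma pp0: assumes ds: "diagonal_section \<delta>" shows "pp \<delta> 0 = 0"
proof -
  have lip: "lipI (delta_hat \<delta>)" using h_props[OF ds] by simp
  show ?thesis unfolding pp_def
    using vsup_le_len[OF lip G_max(1), of 0 0] vsup_nonneg[OF lip G_max(1,2), of 0 0] by simp
qed

lemma pp_tv:
  assumes ds: "diagonal_section \<delta>" and st: "0 \<le> a" "a \<le> y" "y \<le> 1"
  defines "h \<equiv> delta_hat \<delta>"
  shows "pp \<delta> y - pp \<delta> a \<le> (total_variation h a y + h y - h a) / 2"
proof -
  have lip: "lipI h" using h_props[OF ds] h_def by simp
  have "pp \<delta> y \<le> pp \<delta> a + vsup (\<lambda>x. max 0 x) h a y"
    unfolding pp_def h_def[symmetric] by (rule vsup_split[OF lip G_max(1,3,4)]) (use st in auto)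
  also have "vsup (\<lambda>x. max 0 x) h a y \<le> (total_variation h a y + h y - h a) / 2"
  proof (rule vsup_least)
    show "a \<le> y" by fact
    fix t n assume p: "part a y t n"
    have "psum abs h t n \<le> vsup abs h a y" by (rule vsup_upper[OF lip]) (use st p in auto)
    then show "psum (\<lambda>x. max 0 x) h t n \<le> (total_variation h a y + h y - h a) / 2"
      unfolding tv_eq psum_pos_abs[OF p] by simp
  qed
  finally show ?thesis by linarith
qed

lemma tv_clip:
  assumes ds: "diagonal_section \<delta>" and st: "0 \<le> a" "a \<le> y" "y \<le> g" "g \<le> 1"
  defines "h \<equiv> delta_hat \<delta>"
  shows "total_variation h a g \<le> total_variation h a y + (g - y)"
proof -
  have lip: "lipI h" using h_props[OF ds] h_def by simp
  have "vsup abs h a g \<le> vsup abs h a y + vsup abs h y g"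
    by (rule vsup_split[OF lip G_abs(1,3,4)]) (use st in auto)
  moreover have "vsup abs h y g \<le> g - y" by (rule vsup_le_len[OF lip G_abs(1)]) (use st in auto)
  ultimately show ?thesis unfolding tv_eq by simp
qed

lemma tv_near:
  assumes ds: "diagonal_section \<delta>" and st: "0 \<le> x" "x \<le> y" "y \<le> 1" "0 \<le> a" "a \<le> g" "g \<le> 1"
    and ov: "max x a \<le> min y g"
  defines "h \<equiv> delta_hat \<delta>"
  shows "total_variation h x y \<le> total_variation h a g + \<bar>x - a\<bar> + \<bar>y - g\<bar>"
proof -
  have lip: "lipI h" using h_props[OF ds] h_def by simp
  define c1 where "c1 = max x a"
  define c2 where "c2 = min y g"
  have c: "x \<le> c1" "c1 \<le> c2" "c2 \<le> y" "a \<le> c1" "c2 \<le> g" using st ov unfolding c1_def c2_def by auto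
  have "vsup abs h x y \<le> vsup abs h x c1 + vsup abs h c1 y"
    by (rule vsup_split[OF lip G_abs(1,3,4)]) (use st c in auto)
  moreover have "vsup abs h c1 y \<le> vsup abs h c1 c2 + vsup abs h c2 y"
    by (rule vsup_split[OF lip G_abs(1,3,4)]) (use st c in auto)
  moreover have "vsup abs h x c1 \<le> c1 - x" by (rule vsup_le_len[OF lip G_abs(1)]) (use st c in auto)
  moreover have "vsup abs h c2 y \<le> y - c2" by (rule vsup_le_len[OF lip G_abs(1)]) (use st c in auto)
  moreover have "vsup abs h c1 c2 \<le> vsup abs h a g" by (rule vsup_mono[OF lip G_abs(1,2)]) (use st c in auto)
  moreover have "c1 - x \<le> \<bar>x - a\<bar>" "y - c2 \<le> \<bar>y - g\<bar>" unfolding c1_def c2_def by auto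
  ultimately show ?thesis unfolding tv_eq by linarith
qed

definition VV :: "(real \<Rightarrow> real \<Rightarrow> real) \<Rightarrow> real \<Rightarrow> real \<Rightarrow> real \<Rightarrow> real \<Rightarrow> real" where
  "VV C x1 x2 y1 y2 = C x2 y2 + C x1 y1 - C x2 y1 - C x1 y2"

lemma max_submod:
  fixes u1 u2 v1 v2 :: real
  assumes "u1 \<le> u2" "v1 \<le> v2"
  shows "max 0 (u2 - v2) + max 0 (u1 - v1) \<le> max 0 (u2 - v1) + max 0 (u1 - v2)"
  using assms by (simp add: max_def)

lemma VV_split_x: "VV C a b c d = VV C a s c d + VV C s t c d + VV C t b c d"
  unfolding VV_def by simp
lemma VV_split_y: "VV C a b c d = VV C a b c s + VV C a b s t + VV C a b t d"
  unfolding VV_def by simp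
lemma VV_degen: "VV C a a c d = 0" "VV C a b c c = 0" unfolding VV_def by simp_all

definition mkC :: "(real \<Rightarrow> real) \<Rightarrow> (real \<Rightarrow> real) \<Rightarrow> (real \<Rightarrow> real) \<Rightarrow> (real \<Rightarrow> real) \<Rightarrow> real \<Rightarrow> real \<Rightarrow> real" where
  "mkC A B A' B' x y = (if x \<le> y then x - max 0 (A x - B y) else y - max 0 (A' y - B' x))"

locale gen =
  fixes A B A' B' h :: "real \<Rightarrow> real"
  assumes monoA: "\<And>s t. 0 \<le> s \<Longrightarrow> s \<le> t \<Longrightarrow> t \<le> 1 \<Longrightarrow> A s \<le> A t"
    and monoB: "\<And>s t. 0 \<le> s \<Longrightarrow> s \<le> t \<Longrightarrow> t \<le> 1 \<Longrightarrow> B s \<le> B t"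
    and monoA': "\<And>s t. 0 \<le> s \<Longrightarrow> s \<le> t \<Longrightarrow> t \<le> 1 \<Longrightarrow> A' s \<le> A' t"
    and monoB': "\<And>s t. 0 \<le> s \<Longrightarrow> s \<le> t \<Longrightarrow> t \<le> 1 \<Longrightarrow> B' s \<le> B' t"
    and mono4: "\<And>s t. 0 \<le> s \<Longrightarrow> s \<le> t \<Longrightarrow> t \<le> 1 \<Longrightarrow> s - A s - B' s \<le> t - A t - B' t"
    and hA: "\<And>t. 0 \<le> t \<Longrightarrow> t \<le> 1 \<Longrightarrow> A t - B t = h t"
    and hA': "\<And>t. 0 \<le> t \<Longrightarrow> t \<le> 1 \<Longrightarrow> A' t - B' t = h t"
    and h0: "h 0 = 0" and h1: "h 1 = 0"
    and hr: "\<And>t. 0 \<le> t \<Longrightarrow> t \<le> 1 \<Longrightarrow> 0 \<le> h t \<and> h t \<le> t"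
begin

abbreviation "C \<equiv> mkC A B A' B'"

lemma Lform: "0 \<le> y \<Longrightarrow> y \<le> x \<Longrightarrow> x \<le> 1 \<Longrightarrow> C x y = y - max 0 (A' y - B' x)"
  unfolding mkC_def using hA[of y] hA'[of y] by auto

lemma Uform: "x \<le> y \<Longrightarrow> C x y = x - max 0 (A x - B y)"
  unfolding mkC_def by auto

lemma diag: "0 \<le> t \<Longrightarrow> t \<le> 1 \<Longrightarrow> C t t = t - h t"
  unfolding mkC_def using hA[of t] hr[of t] by auto

lemma U_rect:
  assumes "0 \<le> x1" "x1 \<le> x2" "x2 \<le> y1" "y1 \<le> y2" "y2 \<le> 1"
  shows "0 \<le> VV C x1 x2 y1 y2"
proof -
  have "max 0 (A x2 - B y2) + max 0 (A x1 - B y1) \<le> max 0 (A x2 - B y1) + max 0 (A x1 - B y2)"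
    by (rule max_submod) (use assms monoA monoB in auto)
  then show ?thesis unfolding VV_def using assms by (simp add: Uform)
qed

lemma L_rect:
  assumes "0 \<le> y1" "y1 \<le> y2" "y2 \<le> x1" "x1 \<le> x2" "x2 \<le> 1"
  shows "0 \<le> VV C x1 x2 y1 y2"
proof -
  have "max 0 (A' y2 - B' x2) + max 0 (A' y1 - B' x1) \<le> max 0 (A' y2 - B' x1) + max 0 (A' y1 - B' x2)"
    by (rule max_submod) (use assms monoA' monoB' in auto)
  then show ?thesis unfolding VV_def using assms by (simp add: Lform)
qed

lemma D_sq:
  assumes "0 \<le> s" "s \<le> t" "t \<le> 1"
  shows "0 \<le> VV C s t s t"
proof -
  have "C t t = t - h t" "C s s = s - h s" using diag assms by auto
  moreover have "C s t = s - max 0 (A s - B t)" using Uform assms by auto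
  moreover have "C t s = s - max 0 (A' s - B' t)" using Lform assms by auto
  moreover have "s - A s - B' s \<le> t - A t - B' t" using mono4 assms by auto
  moreover have "A t - B t = h t" "A' s - B' s = h s" using hA hA' assms by auto
  ultimately show ?thesis unfolding VV_def by (simp add: max_def)
qed

lemma twoinc:
  assumes "0 \<le> a" "a \<le> b" "b \<le> 1" "0 \<le> c" "c \<le> d" "d \<le> 1"
  shows "0 \<le> VV C a b c d"
proof -
  consider "b \<le> c" | "d \<le> a" | "c < b" "a < d" by linarith
  then show ?thesis
  proof cases
    case 1 then show ?thesis using U_rect assms by auto
  next
    case 2 then show ?thesis using L_rect assms by auto
  next
    case 3
    define s where "s = max a c"
    define t where "t = min b d"
    have st: "a \<le> s" "c \<le> s" "s \<le> t" "t \<le> b" "t \<le> d" using 3 assms unfolding s_def t_def by auto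
    have e: "VV C a b c d =
      (VV C a s c s + VV C a s s t + VV C a s t d) +
      (VV C s t c s + VV C s t s t + VV C s t t d) +
      (VV C t b c s + VV C t b s t + VV C t b t d)"
      using VV_split_x[of C a b c d s t] VV_split_y[of C _ _ c d s t] by simp
    have z1: "VV C a s c s = 0" using VV_degen unfolding s_def by (auto simp: max_def)
    have z2: "VV C t b t d = 0" using VV_degen unfolding t_def by (auto simp: min_def)
    have "0 \<le> VV C a s s t" "0 \<le> VV C a s t d" "0 \<le> VV C s t t d"
      using U_rect st assms by auto
    moreover have "0 \<le> VV C s t c s" "0 \<le> VV C t b c s" "0 \<le> VV C t b s t"
      using L_rect st assms by auto
    moreover have "0 \<le> VV C s t s t" using D_sq st assms by auto
    ultimately show ?thesis using e z1 z2 by linarith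
  qed
qed

lemma is_copula: "copula C"
  unfolding copula_def
proof (intro conjI)
  show "\<forall>x\<in>{0..1}. \<forall>y\<in>{0..1}. C x y \<in> {0..1}"
  proof (intro ballI)
  fix x y :: real assume x: "x \<in> {0..1}" and y: "y \<in> {0..1}"
  show "C x y \<in> {0..1}"
  proof (cases "x \<le> y")
    case True
    have "A x - B y \<le> A x - B x" using monoB[of x y] x y True by auto
    then show ?thesis using hA[of x] hr[of x] x True by (auto simp: Uform)
  next
    case False
    have "A' y - B' x \<le> A' y - B' y" using monoB'[of y x] x y False by auto
    then show ?thesis using hA'[of y] hr[of y] y False x by (auto simp: Lform)
  qed
  qed
  show "\<forall>x\<in>{0..1}. C x 0 = 0 \<and> C 0 x = 0 \<and> C x 1 = x \<and> C 1 x = x"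
  proof
  fix x :: real assume x: "x \<in> {0..1}"
  have a1: "A' 0 - B' x \<le> 0" using monoB'[of 0 x] hA'[of 0] h0 x by auto
  have a2: "A 0 - B x \<le> 0" using monoB[of 0 x] hA[of 0] h0 x by auto
  have a3: "A x - B 1 \<le> 0" using monoA[of x 1] hA[of 1] h1 x by auto
  have a4: "A' x - B' 1 \<le> 0" using monoA'[of x 1] hA'[of 1] h1 x by auto
  show "C x 0 = 0 \<and> C 0 x = 0 \<and> C x 1 = x \<and> C 1 x = x"
    using a1 a2 a3 a4 x by (auto simp: Lform[of 0 x] Uform Lform[of x 1])
  qed
  show "\<forall>a\<in>{0..1}. \<forall>b\<in>{0..1}. \<forall>c\<in>{0..1}. \<forall>d\<in>{0..1}. a \<le> b \<longrightarrow> c \<le> d \<longrightarrow> 0 \<le> C b d + C a c - C b c - C a d"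
    using twoinc unfolding VV_def by auto
qed

end

definition Acop :: "(real \<Rightarrow> real) \<Rightarrow> real \<Rightarrow> real \<Rightarrow> real \<Rightarrow> real" where
  "Acop \<delta> a g t = (if t \<le> a then pp \<delta> t
     else if t \<le> g then 2 * pp \<delta> a - delta_hat \<delta> a + (t - a) - pp \<delta> t + delta_hat \<delta> t
     else 2 * pp \<delta> a - delta_hat \<delta> a + (g - a) - pp \<delta> g + delta_hat \<delta> g + pp \<delta> t - pp \<delta> g)"

lemma acop1: "t \<le> a \<Longrightarrow> Acop \<delta> a g t = pp \<delta> t" unfolding Acop_def by simp
lemma acop2: "a < t \<Longrightarrow> t \<le> g \<Longrightarrow> Acop \<delta> a g t = 2 * pp \<delta> a - delta_hat \<delta> a + (t - a) - pp \<delta> t + delta_hat \<delta> t"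
  unfolding Acop_def by simp
lemma acop3: "g < t \<Longrightarrow> a \<le> g \<Longrightarrow> Acop \<delta> a g t = 2 * pp \<delta> a - delta_hat \<delta> a + (g - a) - pp \<delta> g + delta_hat \<delta> g + pp \<delta> t - pp \<delta> g"
  unfolding Acop_def by simp

lemma acop_mono:
  assumes ds: "diagonal_section \<delta>" and ag: "0 \<le> a" "a \<le> g" "g \<le> 1"
    and st: "0 \<le> s" "s \<le> t" "t \<le> 1"
  defines "h \<equiv> delta_hat \<delta>"
  shows "Acop \<delta> a g s \<le> Acop \<delta> a g t \<and> Acop \<delta> a g s - h s \<le> Acop \<delta> a g t - h t \<and>
         s - Acop \<delta> a g s - (pp \<delta> s - h s) \<le> t - Acop \<delta> a g t - (pp \<delta> t - h t)"
proof -
  note I = pp_props[OF ds, unfolded h_def[symmetric]]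
  note D = delta_hat_def
  consider "t \<le> a" | "s \<le> a" "a < t" "t \<le> g" | "s \<le> a" "g < t" | "a < s" "t \<le> g"
    | "a < s" "s \<le> g" "g < t" | "g < s" by linarith
  then show ?thesis
  proof cases
    case 1
    have J0: "pp \<delta> s \<le> pp \<delta> t" "pp \<delta> s + h t - h s \<le> pp \<delta> t" "2 * pp \<delta> t \<le> 2 * pp \<delta> s + (t - s) + (h t - h s)" "h t - h s \<le> t - s" "h s - h t \<le> t - s"
      using I[of s t] 1 st ag by (auto simp: abs_le_iff field_simps)
    have E1: "Acop \<delta> a g s = pp \<delta> s" by (rule acop1) (use 1 st ag in auto)
    have E2: "Acop \<delta> a g t = pp \<delta> t" by (rule acop1) (use 1 st ag in auto)
    note E = E1 E2
    show ?thesis unfolding E h_def[symmetric] by (use J0 in \<open>intro conjI; linarith\<close>)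
  next
    case 2
    have J0: "pp \<delta> s \<le> pp \<delta> a" "pp \<delta> s + h a - h s \<le> pp \<delta> a" "2 * pp \<delta> a \<le> 2 * pp \<delta> s + (a - s) + (h a - h s)" "h a - h s \<le> a - s" "h s - h a \<le> a - s"
      using I[of s a] 2 st ag by (auto simp: abs_le_iff field_simps)
    have J1: "pp \<delta> a \<le> pp \<delta> t" "pp \<delta> a + h t - h a \<le> pp \<delta> t" "2 * pp \<delta> t \<le> 2 * pp \<delta> a + (t - a) + (h t - h a)" "h t - h a \<le> t - a" "h a - h t \<le> t - a"
      using I[of a t] 2 st ag by (auto simp: abs_le_iff field_simps)
    have E1: "Acop \<delta> a g s = pp \<delta> s" by (rule acop1) (use 2 st ag in auto)
    have E2: "Acop \<delta> a g t = 2 * pp \<delta> a - delta_hat \<delta> a + (t - a) - pp \<delta> t + delta_hat \<delta> t" by (rule acop2) (use 2 st ag in auto)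
    note E = E1 E2
    show ?thesis unfolding E h_def[symmetric] by (use J0 J1 in \<open>intro conjI; linarith\<close>)
  next
    case 3
    have J0: "pp \<delta> s \<le> pp \<delta> a" "pp \<delta> s + h a - h s \<le> pp \<delta> a" "2 * pp \<delta> a \<le> 2 * pp \<delta> s + (a - s) + (h a - h s)" "h a - h s \<le> a - s" "h s - h a \<le> a - s"
      using I[of s a] 3 st ag by (auto simp: abs_le_iff field_simps)
    have J1: "pp \<delta> a \<le> pp \<delta> g" "pp \<delta> a + h g - h a \<le> pp \<delta> g" "2 * pp \<delta> g \<le> 2 * pp \<delta> a + (g - a) + (h g - h a)" "h g - h a \<le> g - a" "h a - h g \<le> g - a"
      using I[of a g] 3 st ag by (auto simp: abs_le_iff field_simps)
    have J2: "pp \<delta> g \<le> pp \<delta> t" "pp \<delta> g + h t - h g \<le> pp \<delta> t" "2 * pp \<delta> t \<le> 2 * pp \<delta> g + (t - g) + (h t - h g)" "h t - h g \<le> t - g" "h g - h t \<le> t - g"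
      using I[of g t] 3 st ag by (auto simp: abs_le_iff field_simps)
    have E1: "Acop \<delta> a g s = pp \<delta> s" by (rule acop1) (use 3 st ag in auto)
    have E2: "Acop \<delta> a g t = 2 * pp \<delta> a - delta_hat \<delta> a + (g - a) - pp \<delta> g + delta_hat \<delta> g + pp \<delta> t - pp \<delta> g" by (rule acop3) (use 3 st ag in auto)
    note E = E1 E2
    show ?thesis unfolding E h_def[symmetric] by (use J0 J1 J2 in \<open>intro conjI; linarith\<close>)
  next
    case 4
    have J0: "pp \<delta> s \<le> pp \<delta> t" "pp \<delta> s + h t - h s \<le> pp \<delta> t" "2 * pp \<delta> t \<le> 2 * pp \<delta> s + (t - s) + (h t - h s)" "h t - h s \<le> t - s" "h s - h t \<le> t - s"
      using I[of s t] 4 st ag by (auto simp: abs_le_iff field_simps)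
    have E1: "Acop \<delta> a g s = 2 * pp \<delta> a - delta_hat \<delta> a + (s - a) - pp \<delta> s + delta_hat \<delta> s" by (rule acop2) (use 4 st ag in auto)
    have E2: "Acop \<delta> a g t = 2 * pp \<delta> a - delta_hat \<delta> a + (t - a) - pp \<delta> t + delta_hat \<delta> t" by (rule acop2) (use 4 st ag in auto)
    note E = E1 E2
    show ?thesis unfolding E h_def[symmetric] by (use J0 in \<open>intro conjI; linarith\<close>)
  next
    case 5
    have J0: "pp \<delta> s \<le> pp \<delta> g" "pp \<delta> s + h g - h s \<le> pp \<delta> g" "2 * pp \<delta> g \<le> 2 * pp \<delta> s + (g - s) + (h g - h s)" "h g - h s \<le> g - s" "h s - h g \<le> g - s"
      using I[of s g] 5 st ag by (auto simp: abs_le_iff field_simps)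
    have J1: "pp \<delta> g \<le> pp \<delta> t" "pp \<delta> g + h t - h g \<le> pp \<delta> t" "2 * pp \<delta> t \<le> 2 * pp \<delta> g + (t - g) + (h t - h g)" "h t - h g \<le> t - g" "h g - h t \<le> t - g"
      using I[of g t] 5 st ag by (auto simp: abs_le_iff field_simps)
    have E1: "Acop \<delta> a g s = 2 * pp \<delta> a - delta_hat \<delta> a + (s - a) - pp \<delta> s + delta_hat \<delta> s" by (rule acop2) (use 5 st ag in auto)
    have E2: "Acop \<delta> a g t = 2 * pp \<delta> a - delta_hat \<delta> a + (g - a) - pp \<delta> g + delta_hat \<delta> g + pp \<delta> t - pp \<delta> g" by (rule acop3) (use 5 st ag in auto)
    note E = E1 E2
    show ?thesis unfolding E h_def[symmetric] by (use J0 J1 in \<open>intro conjI; linarith\<close>)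
  next
    case 6
    have J0: "pp \<delta> s \<le> pp \<delta> t" "pp \<delta> s + h t - h s \<le> pp \<delta> t" "2 * pp \<delta> t \<le> 2 * pp \<delta> s + (t - s) + (h t - h s)" "h t - h s \<le> t - s" "h s - h t \<le> t - s"
      using I[of s t] 6 st ag by (auto simp: abs_le_iff field_simps)
    have E1: "Acop \<delta> a g s = 2 * pp \<delta> a - delta_hat \<delta> a + (g - a) - pp \<delta> g + delta_hat \<delta> g + pp \<delta> s - pp \<delta> g" by (rule acop3) (use 6 st ag in auto)
    have E2: "Acop \<delta> a g t = 2 * pp \<delta> a - delta_hat \<delta> a + (g - a) - pp \<delta> g + delta_hat \<delta> g + pp \<delta> t - pp \<delta> g" by (rule acop3) (use 6 st ag in auto)
    note E = E1 E2
    show ?thesis unfolding E h_def[symmetric] by (use J0 in \<open>intro conjI; linarith\<close>)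
  qed
qed

lemma cop_gen:
  assumes ds: "diagonal_section \<delta>" and ag: "0 \<le> a" "a \<le> g" "g \<le> 1"
  shows "gen (Acop \<delta> a g) (\<lambda>t. Acop \<delta> a g t - delta_hat \<delta> t) (pp \<delta>) (\<lambda>t. pp \<delta> t - delta_hat \<delta> t) (delta_hat \<delta>)"
proof
  note M = acop_mono[OF ds ag]
  note I = pp_props[OF ds]
  note H = h_props[OF ds]
  fix s t :: real assume st: "0 \<le> s" "s \<le> t" "t \<le> 1"
  show "Acop \<delta> a g s \<le> Acop \<delta> a g t" using M[OF st] by simp
  show "Acop \<delta> a g s - delta_hat \<delta> s \<le> Acop \<delta> a g t - delta_hat \<delta> t" using M[OF st] by simp
  show "s - Acop \<delta> a g s - (pp \<delta> s - delta_hat \<delta> s) \<le> t - Acop \<delta> a g t - (pp \<delta> t - delta_hat \<delta> t)"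
    using M[OF st] by simp
  show "pp \<delta> s \<le> pp \<delta> t" using I[OF st] by simp
  show "pp \<delta> s - delta_hat \<delta> s \<le> pp \<delta> t - delta_hat \<delta> t" using I[OF st] by simp
next
  show "delta_hat \<delta> 0 = 0" "delta_hat \<delta> 1 = 0" using h_props[OF ds] by auto
next
  fix t :: real assume "0 \<le> t" "t \<le> 1"
  then show "0 \<le> delta_hat \<delta> t \<and> delta_hat \<delta> t \<le> t" using h_props(4)[OF ds, of t] by auto
qed auto

lemma exists_copula:
  assumes ds: "diagonal_section \<delta>" and ag: "0 \<le> a" "a \<le> g" "g \<le> 1"
  shows "\<exists>C. copula C \<and> (\<forall>t\<in>{0..1}. C t t = \<delta> t) \<and>
     (pp \<delta> g - pp \<delta> a \<le> g - a - delta_hat \<delta> a \<longrightarrow> C a g = a)"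
proof -
  interpret G: gen "Acop \<delta> a g" "\<lambda>t. Acop \<delta> a g t - delta_hat \<delta> t" "pp \<delta>" "\<lambda>t. pp \<delta> t - delta_hat \<delta> t" "delta_hat \<delta>"
    by (rule cop_gen[OF ds ag])
  let ?C = "mkC (Acop \<delta> a g) (\<lambda>t. Acop \<delta> a g t - delta_hat \<delta> t) (pp \<delta>) (\<lambda>t. pp \<delta> t - delta_hat \<delta> t)"
  have "copula ?C" by (rule G.is_copula)
  moreover have "\<forall>t\<in>{0..1}. ?C t t = \<delta> t" using G.diag unfolding delta_hat_def by auto
  moreover have "?C a g = a" if c: "pp \<delta> g - pp \<delta> a \<le> g - a - delta_hat \<delta> a"
  proof -
    have "Acop \<delta> a g a = pp \<delta> a" unfolding Acop_def by simp
    moreover have "Acop \<delta> a g g - delta_hat \<delta> g = 2 * pp \<delta> a - delta_hat \<delta> a + (g - a) - pp \<delta> g"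
      unfolding Acop_def using ag by auto
    ultimately show ?thesis using G.Uform[of a g] ag c by simp
  qed
  ultimately show ?thesis by blast
qed

lemma cop_facts:
  assumes "copula C"
  shows "\<And>x y. x \<in> {0..1} \<Longrightarrow> y \<in> {0..1} \<Longrightarrow> C x y \<in> {0..1}"
    "\<And>x. x \<in> {0..1} \<Longrightarrow> C x 0 = 0 \<and> C 0 x = 0 \<and> C x 1 = x \<and> C 1 x = x"
    "\<And>a b c d. a \<in> {0..1} \<Longrightarrow> b \<in> {0..1} \<Longrightarrow> c \<in> {0..1} \<Longrightarrow> d \<in> {0..1} \<Longrightarrow>
        a \<le> b \<Longrightarrow> c \<le> d \<Longrightarrow> 0 \<le> C b d + C a c - C b c - C a d"
  using assms unfolding copula_def by blast+

lemma cop_step: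
  assumes C: "copula C" and dg: "\<forall>t\<in>{0..1}. C t t = \<delta> t" and r: "0 \<le> a" "a \<le> u" "u \<le> v" "v \<le> 1"
  shows "C a v - C a u \<le> v - u" "C a v - C a u \<le> \<delta> v - \<delta> u"
proof -
  note F = cop_facts[OF C]
  have "0 \<le> C 1 v + C a u - C 1 u - C a v" by (rule F(3)) (use r in auto)
  moreover have "C 1 v = v" "C 1 u = u" using F(2)[of v] F(2)[of u] r by auto
  ultimately show "C a v - C a u \<le> v - u" by simp
  have "0 \<le> C v v + C a u - C v u - C a v" by (rule F(3)) (use r in auto)
  moreover have "0 \<le> C v u + C u 0 - C v 0 - C u u" by (rule F(3)) (use r in auto)
  moreover have "C u 0 = 0" "C v 0 = 0" using F(2)[of v] F(2)[of u] r by auto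
  moreover have "C v v = \<delta> v" "C u u = \<delta> u" using dg r by auto
  ultimately show "C a v - C a u \<le> \<delta> v - \<delta> u" by simp
qed

lemma cop_le_f:
  assumes ds: "diagonal_section \<delta>" and C: "copula C" and dg: "\<forall>t\<in>{0..1}. C t t = \<delta> t"
    and r: "0 \<le> a" "a \<le> y" "y \<le> 1"
  shows "C a y \<le> a" "C a y \<le> f_delta \<delta> a y"
proof -
  note F = cop_facts[OF C]
  have "0 \<le> C a 1 + C 0 y - C a y - C 0 1" by (rule F(3)) (use r in auto)
  moreover have "C a 1 = a" "C 0 y = 0" "C 0 1 = 0" using F(2)[of a] F(2)[of y] F(2)[of 1] r by auto
  ultimately show "C a y \<le> a" by simp
  define h where "h = delta_hat \<delta>"
  have lip: "lipI h" using h_props[OF ds] h_def by simp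
  have "total_variation h a y \<le> 2 * y - 2 * C a y - h a - h y"
    unfolding tv_eq
  proof (rule vsup_least)
    show "a \<le> y" by fact
    fix t n assume p: "part a y t n"
    have "psum (\<lambda>x. max 0 x) h t n \<le> (\<lambda>u. u - C a u) (t n) - (\<lambda>u. u - C a u) (t 0)"
    proof (rule psum_tele)
      fix i assume i: "i < n"
      have rr: "a \<le> t i" "t i \<le> t (Suc i)" "t (Suc i) \<le> y"
        using part_range[OF p, of i] part_range[OF p, of "Suc i"] i p unfolding part_def by auto
      have "C a (t (Suc i)) - C a (t i) \<le> t (Suc i) - t i"
           "C a (t (Suc i)) - C a (t i) \<le> \<delta> (t (Suc i)) - \<delta> (t i)"
        using cop_step[OF C dg, of a "t i" "t (Suc i)"] rr r by auto
      then show "max 0 (h (t (Suc i)) - h (t i)) \<le> (t (Suc i) - C a (t (Suc i))) - (t i - C a (t i))"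
        unfolding h_def delta_hat_def by auto
    qed
    then have "psum (\<lambda>x. max 0 x) h t n \<le> (y - C a y) - (a - C a a)" using p unfolding part_def by simp
    moreover have "C a a = a - h a" using dg r unfolding h_def delta_hat_def by auto
    ultimately show "psum abs h t n \<le> 2 * y - 2 * C a y - h a - h y"
      unfolding psum_pos_abs[OF p] by simp
  qed
  then show "C a y \<le> f_delta \<delta> a y"
    unfolding f_delta_def TV_def h_def[symmetric] using r by (simp add: field_simps)
qed

definition mm :: "(real \<Rightarrow> real) \<Rightarrow> real \<Rightarrow> real \<Rightarrow> real" where
  "mm \<delta> x y = Inf (delta_hat \<delta> ` {x..y})"

lemma h_cont:
  assumes ds: "diagonal_section \<delta>"
  shows "continuous_on {0..1} (delta_hat \<delta>)"
proof (rule lipschitz_on_continuous_on)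
  show "1-lipschitz_on {0..1} (delta_hat \<delta>)"
  proof (rule lipschitz_onI)
    fix x y :: real assume "x \<in> {0..1}" "y \<in> {0..1}"
    then show "dist (delta_hat \<delta> x) (delta_hat \<delta> y) \<le> 1 * dist x y"
      using lipD[OF h_props(1)[OF ds]] by (simp add: dist_real_def)
  qed simp
qed

lemma mm_props:
  assumes ds: "diagonal_section \<delta>" and r: "0 \<le> x" "x \<le> y" "y \<le> 1"
  shows "\<And>s. s \<in> {x..y} \<Longrightarrow> mm \<delta> x y \<le> delta_hat \<delta> s" "\<exists>t\<in>{x..y}. mm \<delta> x y = delta_hat \<delta> t"
proof -
  have "continuous_on {x..y} (delta_hat \<delta>)"
    by (rule continuous_on_subset[OF h_cont[OF ds]]) (use r in auto)
  then obtain t where t: "t \<in> {x..y}" "\<And>s. s \<in> {x..y} \<Longrightarrow> delta_hat \<delta> t \<le> delta_hat \<delta> s"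
    using continuous_attains_inf[of "{x..y}" "delta_hat \<delta>"] r by auto
  have e: "mm \<delta> x y = delta_hat \<delta> t" unfolding mm_def
    by (rule cInf_eq_minimum) (use t in auto)
  then show "\<exists>t\<in>{x..y}. mm \<delta> x y = delta_hat \<delta> t" using t by auto
  fix s assume "s \<in> {x..y}" then show "mm \<delta> x y \<le> delta_hat \<delta> s" using e t by auto
qed

definition BQ :: "(real \<Rightarrow> real) \<Rightarrow> real \<Rightarrow> real \<Rightarrow> real" where
  "BQ \<delta> x y = min x y - mm \<delta> (min x y) (max x y)"

lemma BQ_sym: "BQ \<delta> x y = BQ \<delta> y x" unfolding BQ_def by (simp add: min.commute max.commute)

lemma BQ_mono:
  assumes ds: "diagonal_section \<delta>" and r: "0 \<le> x1" "x1 \<le> x2" "x2 \<le> 1" "0 \<le> y" "y \<le> 1"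
  shows "BQ \<delta> x1 y \<le> BQ \<delta> x2 y \<and> BQ \<delta> x2 y - BQ \<delta> x1 y \<le> x2 - x1"
proof -
  define h where "h = delta_hat \<delta>"
  have L: "\<And>u v. u \<in> {0..1} \<Longrightarrow> v \<in> {0..1} \<Longrightarrow> h u - h v \<le> \<bar>u - v\<bar>"
    using lipD[OF h_props(1)[OF ds]] unfolding h_def by fastforce
  note M = mm_props[OF ds, unfolded h_def[symmetric]]
  consider "y \<le> x1" | "x1 \<le> y" "y \<le> x2" | "x2 \<le> y" by linarith
  then show ?thesis
  proof cases
    case 1
    have e: "BQ \<delta> x1 y = y - mm \<delta> y x1" "BQ \<delta> x2 y = y - mm \<delta> y x2" unfolding BQ_def using 1 r by auto
    obtain t1 where t1: "t1 \<in> {y..x1}" "mm \<delta> y x1 = h t1" using M(2)[of y x1] 1 r by auto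
    obtain t2 where t2: "t2 \<in> {y..x2}" "mm \<delta> y x2 = h t2" using M(2)[of y x2] 1 r by auto
    have a1: "mm \<delta> y x2 \<le> h t1" using M(1)[of y x2 t1] t1 1 r by auto
    have a2: "mm \<delta> y x2 - mm \<delta> y x1 \<ge> - (x2 - x1)"
    proof (cases "t2 \<le> x1")
      case True then show ?thesis using M(1)[of y x1 t2] t2 1 r by auto
    next
      case False
      have "mm \<delta> y x1 \<le> h x1" using M(1)[of y x1 x1] 1 r by auto
      moreover have "h x1 - h t2 \<le> \<bar>x1 - t2\<bar>" using L[of x1 t2] t2 r 1 by auto
      ultimately show ?thesis using t2 False by auto
    qed
    show ?thesis unfolding e using a1 a2 t1 by auto
  next
    case 2
    have e: "BQ \<delta> x1 y = x1 - mm \<delta> x1 y" "BQ \<delta> x2 y = y - mm \<delta> y x2" unfolding BQ_def using 2 r by auto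
    obtain t1 where t1: "t1 \<in> {x1..y}" "mm \<delta> x1 y = h t1" using M(2)[of x1 y] 2 r by auto
    obtain t2 where t2: "t2 \<in> {y..x2}" "mm \<delta> y x2 = h t2" using M(2)[of y x2] 2 r by auto
    have "mm \<delta> y x2 \<le> h y" "mm \<delta> x1 y \<le> h y" using M(1)[of y x2 y] M(1)[of x1 y y] 2 r by auto
    moreover have "h y - h t1 \<le> \<bar>y - t1\<bar>" "h y - h t2 \<le> \<bar>y - t2\<bar>" using L[of y t1] L[of y t2] t1 t2 r 2 by auto
    ultimately show ?thesis unfolding e using t1 t2 by auto
  next
    case 3
    have e: "BQ \<delta> x1 y = x1 - mm \<delta> x1 y" "BQ \<delta> x2 y = x2 - mm \<delta> x2 y" unfolding BQ_def using 3 r by auto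
    obtain t1 where t1: "t1 \<in> {x1..y}" "mm \<delta> x1 y = h t1" using M(2)[of x1 y] 3 r by auto
    obtain t2 where t2: "t2 \<in> {x2..y}" "mm \<delta> x2 y = h t2" using M(2)[of x2 y] 3 r by auto
    have a1: "mm \<delta> x1 y \<le> h t2" using M(1)[of x1 y t2] t2 3 r by auto
    have a2: "mm \<delta> x2 y - mm \<delta> x1 y \<le> x2 - x1"
    proof (cases "x2 \<le> t1")
      case True then show ?thesis using M(1)[of x2 y t1] t1 3 r by auto
    next
      case False
      have "mm \<delta> x2 y \<le> h x2" using M(1)[of x2 y x2] 3 r by auto
      moreover have "h x2 - h t1 \<le> \<bar>x2 - t1\<bar>" using L[of x2 t1] t1 r 3 by auto
      ultimately show ?thesis using t1 False by auto
    qed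
    show ?thesis unfolding e using a1 a2 t2 by auto
  qed
qed

lemma BQ_quasi:
  assumes ds: "diagonal_section \<delta>"
  shows "quasi_copula (BQ \<delta>)" "\<forall>t\<in>{0..1}. BQ \<delta> t t = \<delta> t"
proof -
  define h where "h = delta_hat \<delta>"
  note M = mm_props[OF ds, unfolded h_def[symmetric]]
  note H = h_props[OF ds, unfolded h_def[symmetric]]
  have rng: "BQ \<delta> x y \<in> {0..1}" if xr: "x \<in> {0..1}" "y \<in> {0..1}" for x y
  proof -
    have "\<exists>t\<in>{min x y..max x y}. mm \<delta> (min x y) (max x y) = h t"
      by (rule M(2)) (use xr in auto)
    then obtain t where t: "t \<in> {min x y..max x y}" "mm \<delta> (min x y) (max x y) = h t" by blast
    have "mm \<delta> (min x y) (max x y) \<le> h (min x y)" using M(1)[of "min x y" "max x y" "min x y"] xr by auto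
    moreover have "0 \<le> t" "t \<le> 1" using t xr by (auto simp: min_def max_def split: if_splits)
    then have "0 \<le> h t" using H(4)[of t] by auto
    moreover have "h (min x y) \<le> min x y" using H(4)[of "min x y"] xr by (auto simp: min_def)
    ultimately show ?thesis unfolding BQ_def using t xr by auto
  qed
  have bd: "BQ \<delta> x 0 = 0 \<and> BQ \<delta> 0 x = 0 \<and> BQ \<delta> x 1 = x \<and> BQ \<delta> 1 x = x" if xr: "x \<in> {0..1}" for x
  proof -
    obtain t where t: "t \<in> {0..x}" "mm \<delta> 0 x = h t" using M(2)[of 0 x] xr by auto
    obtain s where s: "s \<in> {x..1}" "mm \<delta> x 1 = h s" using M(2)[of x 1] xr by auto
    have "mm \<delta> 0 x \<le> h 0" "mm \<delta> x 1 \<le> h 1" using M(1)[of 0 x 0] M(1)[of x 1 1] xr by auto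
    moreover have "0 \<le> h t" "0 \<le> h s" using H(4)[of t] H(4)[of s] t s xr by auto
    ultimately have "mm \<delta> 0 x = 0" "mm \<delta> x 1 = 0" using H(2,3) t s by auto
    then show ?thesis unfolding BQ_def using xr by (auto simp: min_def max_def)
  qed
  show "quasi_copula (BQ \<delta>)"
    unfolding quasi_copula_def
  proof (intro conjI)
    show "\<forall>x\<in>{0..1}. \<forall>y\<in>{0..1}. BQ \<delta> x y \<in> {0..1}" using rng by auto
    show "\<forall>x\<in>{0..1}. BQ \<delta> x 0 = 0 \<and> BQ \<delta> 0 x = 0 \<and> BQ \<delta> x 1 = x \<and> BQ \<delta> 1 x = x" using bd by auto
    show "\<forall>x1\<in>{0..1}. \<forall>x2\<in>{0..1}. \<forall>y\<in>{0..1}. x1 \<le> x2 \<longrightarrow>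
        BQ \<delta> x1 y \<le> BQ \<delta> x2 y \<and> BQ \<delta> x2 y - BQ \<delta> x1 y \<le> x2 - x1 \<and>
        BQ \<delta> y x1 \<le> BQ \<delta> y x2 \<and> BQ \<delta> y x2 - BQ \<delta> y x1 \<le> x2 - x1"
      using BQ_mono[OF ds] BQ_sym[of \<delta>] by (metis atLeastAtMost_iff)
  qed
  show "\<forall>t\<in>{0..1}. BQ \<delta> t t = \<delta> t"
  proof
    fix t :: real assume t: "t \<in> {0..1}"
    have "mm \<delta> t t = h t" using M(2)[of t t] t by auto
    then show "BQ \<delta> t t = \<delta> t" unfolding BQ_def h_def delta_hat_def by simp
  qed
qed

lemma lower_eq:
  assumes ds: "diagonal_section \<delta>" and r: "0 \<le> a" "a \<le> y" "y \<le> 1"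
  shows "lower_qcopula \<delta> a y = a - mm \<delta> a y"
  unfolding lower_qcopula_def
proof (rule cInf_eq_minimum)
  have "BQ \<delta> a y = a - mm \<delta> a y" unfolding BQ_def using r by (simp add: min_def max_def)
  then show "a - mm \<delta> a y \<in> {Q a y |Q. quasi_copula Q \<and> (\<forall>t\<in>{0..1}. Q t t = \<delta> t)}"
    apply (intro CollectI exI[of _ "BQ \<delta>"])
    using BQ_quasi[OF ds] by simp
  fix z assume "z \<in> {Q a y |Q. quasi_copula Q \<and> (\<forall>t\<in>{0..1}. Q t t = \<delta> t)}"
  then obtain Q where Q: "quasi_copula Q" "\<forall>t\<in>{0..1}. Q t t = \<delta> t" "z = Q a y" by auto
  obtain t where t: "t \<in> {a..y}" "mm \<delta> a y = delta_hat \<delta> t" using mm_props(2)[OF ds r] by auto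
  have "Q t y - Q a y \<le> t - a" "Q t t \<le> Q t y"
    using Q(1) t r unfolding quasi_copula_def by auto
  then show "a - mm \<delta> a y \<le> z" using Q(2,3) t r unfolding delta_hat_def by auto
qed

theorem lemma4p5:
  fixes \<delta> :: "real \<Rightarrow> real" and x0 :: real
  assumes "diagonal_section \<delta>" and "x0 \<in> {0..1}"
  shows "gU \<delta> x0 \<in> {x0..1}
    \<and> (\<forall>y\<in>{x0..1}. upper_copula \<delta> x0 y - lower_qcopula \<delta> x0 y
          \<le> upper_copula \<delta> x0 (gU \<delta> x0) - lower_qcopula \<delta> x0 (gU \<delta> x0))
    \<and> (\<exists>t\<in>{x0..gU \<delta> x0}. delta_hat \<delta> t
          = upper_copula \<delta> x0 (gU \<delta> x0) - lower_qcopula \<delta> x0 (gU \<delta> x0))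
    \<and> (\<forall>t\<in>{x0..gU \<delta> x0}.
          upper_copula \<delta> x0 (gU \<delta> x0) - lower_qcopula \<delta> x0 (gU \<delta> x0) \<le> delta_hat \<delta> t)"
proof -
  note ds = assms(1)
  have a01: "0 \<le> x0" "x0 \<le> 1" using assms(2) by auto
  define h where "h = delta_hat \<delta>"
  note H = h_props[OF ds, unfolded h_def[symmetric]]
  have L: "\<And>u v. u \<in> {0..1} \<Longrightarrow> v \<in> {0..1} \<Longrightarrow> h u - h v \<le> \<bar>u - v\<bar>"
    using lipD[OF H(1)] by fastforce
  define S where "S = {y. y \<in> {0..1} \<and> (x0, y) \<in> Df \<delta>}"
  have diag_eq: "{(x, x) | x. x \<in> {0..1::real}} = (\<lambda>x. (x, x)) ` {0..1}" by auto
  have cdiag: "closed {(x, x) | x. x \<in> {0..1::real}}"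
    unfolding diag_eq
    by (rule compact_imp_closed, rule compact_continuous_image) (auto intro!: continuous_intros)
  have cDf: "closed (Df \<delta>)" unfolding Df_def by (rule closed_Un) (use cdiag in auto)
  have S_eq: "S = {0..1} \<inter> (\<lambda>y. (x0, y)) -` Df \<delta>" unfolding S_def by auto
  have cS: "closed S" unfolding S_eq
    by (rule closed_Int[OF closed_atLeastAtMost continuous_closed_vimage[OF cDf]]) (intro continuous_intros)
  have x0S: "x0 \<in> S" unfolding S_def Df_def using a01 by auto
  have bS: "bdd_above S" unfolding S_def by (rule bdd_aboveI[of _ 1]) auto
  define g where "g = Sup S"
  have gS: "g \<in> S" unfolding g_def by (rule closed_contains_Sup) (use x0S bS cS in auto)
  have gmax: "\<And>z. z \<in> S \<Longrightarrow> z \<le> g" unfolding g_def using bS by (rule cSup_upper[rotated])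
  have gU_eq: "gU \<delta> x0 = g" unfolding gU_def
    by (rule Greatest_equality) (use gS gmax in \<open>auto simp: S_def\<close>)
  have g01: "x0 \<le> g" "g \<le> 1" using gmax[OF x0S] gS unfolding S_def by auto
  have F2: "2 * (g - x0) \<le> h x0 + h g + total_variation h x0 g" if gt: "x0 < g"
  proof (rule ccontr)
    assume neg: "\<not> 2 * (g - x0) \<le> h x0 + h g + total_variation h x0 g"
    define \<eta> where "\<eta> = 2 * (g - x0) - (h x0 + h g + total_variation h x0 g)"
    have eta: "0 < \<eta>" using neg unfolding \<eta>_def by simp
    define e where "e = min (\<eta> / 8) ((g - x0) / 2)"
    have e0: "0 < e" using eta gt unfolding e_def by auto
    have "(x0, g) \<in> closure (Df_open \<delta>)" using gS gt unfolding S_def Df_def by auto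
    then obtain z where z: "z \<in> Df_open \<delta>" "dist z (x0, g) < e"
      using e0 unfolding closure_approachable by blast
    obtain x y where xy: "z = (x, y)" by (cases z)
    have dx: "\<bar>x - x0\<bar> < e" using dist_fst_le[of z "(x0, g)"] z(2) xy by (simp add: dist_real_def)
    have dy: "\<bar>y - g\<bar> < e" using dist_snd_le[of z "(x0, g)"] z(2) xy by (simp add: dist_real_def)
    have xy01: "x \<in> {0..1}" "y \<in> {0..1}" and fl: "f_delta \<delta> x y < min x y"
      using z(1) xy unfolding Df_open_def by auto
    have ee: "e \<le> \<eta> / 8" "e \<le> (g - x0) / 2" unfolding e_def by (auto simp: min_def)
    have xlty: "x \<le> y" using dx dy ee by auto
    have ov: "max x x0 \<le> min y g" using dx dy ee by auto
    have tvn: "total_variation h x y \<le> total_variation h x0 g + \<bar>x - x0\<bar> + \<bar>y - g\<bar>"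
      unfolding h_def by (rule tv_near[OF ds]) (use xy01 xlty a01 g01 ov in auto)
    have fl2: "2 * (y - x) < h x + h y + total_variation h x y"
      using fl xlty unfolding f_delta_def TV_def h_def[symmetric] by (simp add: field_simps)
    have "h x - h x0 \<le> \<bar>x - x0\<bar>" "h y - h g \<le> \<bar>y - g\<bar>" using L xy01 a01 g01 by auto
    then show False using fl2 tvn dx dy ee eta unfolding \<eta>_def by (auto simp: abs_if split: if_splits)
  qed
  have F3: "pp \<delta> g - pp \<delta> x0 \<le> g - x0 - h x0"
  proof (cases "g = 1")
    case True
    have "pp \<delta> 1 \<le> pp \<delta> x0 + (1 - x0 + h 1 - h x0) / 2"
      using pp_props(3)[OF ds, of x0 1] a01 unfolding h_def by auto
    moreover have "h x0 \<le> 1 - x0" using H(4)[of x0] a01 by auto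
    ultimately show ?thesis using True H(3) by (auto simp: field_simps)
  next
    case False
    then have g1: "g < 1" using g01 by auto
    have bnd: "pp \<delta> g - pp \<delta> x0 \<le> y - x0 - h x0" if y: "g < y" "y \<le> 1" for y
    proof -
      have "y \<notin> S" using gmax y by force
      then have "(x0, y) \<notin> Df \<delta>" unfolding S_def using y g01 a01 by auto
      then have "(x0, y) \<notin> Df_open \<delta>" unfolding Df_def using closure_subset by blast
      then have "\<not> f_delta \<delta> x0 y < min x0 y" unfolding Df_open_def using y g01 a01 by auto
      then have "2 * (y - x0) \<ge> h x0 + h y + total_variation h x0 y"
        using y g01 unfolding f_delta_def TV_def h_def[symmetric] by (auto simp: field_simps)
      moreover have "pp \<delta> y - pp \<delta> x0 \<le> (total_variation h x0 y + h y - h x0) / 2"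
        unfolding h_def by (rule pp_tv[OF ds]) (use y g01 a01 in auto)
      moreover have "pp \<delta> g \<le> pp \<delta> y" using pp_props(1)[OF ds, of g y] y g01 a01 by auto
      ultimately show ?thesis by (simp add: field_simps)
    qed
    show ?thesis
    proof (rule ccontr)
      assume neg: "\<not> pp \<delta> g - pp \<delta> x0 \<le> g - x0 - h x0"
      define d where "d = pp \<delta> g - pp \<delta> x0 - (g - x0 - h x0)"
      have d0: "0 < d" using neg unfolding d_def by simp
      define y where "y = min 1 (g + d / 2)"
      have "g < y" "y \<le> 1" using d0 g1 unfolding y_def by auto
      from bnd[OF this] have "pp \<delta> g - pp \<delta> x0 \<le> y - x0 - h x0" .
      moreover have "2 * y \<le> 2 * g + d" unfolding y_def by (simp add: min_def field_simps)
      ultimately show False using d0 d_def by linarith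
    qed
  qed
  obtain C0 where C0: "copula C0" "\<forall>t\<in>{0..1}. C0 t t = \<delta> t"
    using exists_copula[OF ds, of 0 0] by auto
  have up_le: "upper_copula \<delta> x0 y \<le> x0 \<and> upper_copula \<delta> x0 y \<le> f_delta \<delta> x0 y"
    if y: "x0 \<le> y" "y \<le> 1" for y
  proof -
    have ne: "{C x0 y |C. copula C \<and> (\<forall>t\<in>{0..1}. C t t = \<delta> t)} \<noteq> {}" using C0 by blast
    have "upper_copula \<delta> x0 y \<le> x0" unfolding upper_copula_def
      by (rule cSup_least[OF ne]) (use cop_le_f(1)[OF ds] y a01 in auto)
    moreover have "upper_copula \<delta> x0 y \<le> f_delta \<delta> x0 y" unfolding upper_copula_def
      by (rule cSup_least[OF ne]) (use cop_le_f(2)[OF ds] y a01 in auto)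
    ultimately show ?thesis by simp
  qed
  have up_g: "upper_copula \<delta> x0 g = x0"
  proof -
    obtain C1 where C1: "copula C1" "\<forall>t\<in>{0..1}. C1 t t = \<delta> t" "C1 x0 g = x0"
      using exists_copula[OF ds a01(1) g01] F3 unfolding h_def by auto
    have "x0 \<le> upper_copula \<delta> x0 g" unfolding upper_copula_def
    proof (rule cSup_upper)
      show "x0 \<in> {C x0 g |C. copula C \<and> (\<forall>t\<in>{0..1}. C t t = \<delta> t)}"
        apply (intro CollectI exI[of _ C1]) using C1 by simp
      show "bdd_above {C x0 g |C. copula C \<and> (\<forall>t\<in>{0..1}. C t t = \<delta> t)}"
        by (rule bdd_aboveI[of _ x0]) (use cop_le_f(1)[OF ds] a01 g01 in auto)
    qed
    then show ?thesis using up_le[of g] g01 by auto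
  qed
  have lo: "\<And>y. x0 \<le> y \<Longrightarrow> y \<le> 1 \<Longrightarrow> lower_qcopula \<delta> x0 y = x0 - mm \<delta> x0 y"
    using lower_eq[OF ds] a01 by auto
  note M = mm_props[OF ds, unfolded h_def[symmetric]]
  obtain tg where tg: "tg \<in> {x0..g}" "mm \<delta> x0 g = h tg" using M(2)[of x0 g] a01 g01 by auto
  have Dg: "upper_copula \<delta> x0 g - lower_qcopula \<delta> x0 g = h tg" using up_g lo[of g] g01 tg by simp
  have P2: "\<forall>y\<in>{x0..1}. upper_copula \<delta> x0 y - lower_qcopula \<delta> x0 y \<le> h tg"
  proof
    fix y assume y: "y \<in> {x0..1}"
    have ly: "lower_qcopula \<delta> x0 y = x0 - mm \<delta> x0 y" using lo y by auto
    have uy: "upper_copula \<delta> x0 y \<le> x0" "upper_copula \<delta> x0 y \<le> f_delta \<delta> x0 y" using up_le y by auto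
    show "upper_copula \<delta> x0 y - lower_qcopula \<delta> x0 y \<le> h tg"
    proof (cases "tg \<le> y")
      case True
      have "mm \<delta> x0 y \<le> h tg" using M(1)[of x0 y tg] True tg y a01 by auto
      then show ?thesis using ly uy by simp
    next
      case False
      then have gt: "x0 < g" using tg y by auto
      have f2: "2 * (g - x0) \<le> h x0 + h g + total_variation h x0 g" by (rule F2[OF gt])
      have tc: "total_variation h x0 g \<le> total_variation h x0 y + (g - y)"
        unfolding h_def by (rule tv_clip[OF ds]) (use y a01 g01 False tg in auto)
      have fy: "2 * upper_copula \<delta> x0 y \<le> 2 * y - (h x0 + h y + total_variation h x0 y)"
        using uy(2) y unfolding f_delta_def TV_def h_def[symmetric] by (simp add: field_simps)
      have my: "mm \<delta> x0 y \<le> h y" using M(1)[of x0 y y] y a01 by auto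
      have "h y - h tg \<le> \<bar>y - tg\<bar>" "h g - h tg \<le> \<bar>g - tg\<bar>" using L[of y tg] L[of g tg] y tg a01 g01 by auto
      then show ?thesis using ly fy my f2 tc False tg by (auto simp: abs_if split: if_splits)
    qed
  qed
  have P4: "\<forall>t\<in>{x0..g}. h tg \<le> h t" using M(1)[of x0 g] tg a01 g01 by auto
  show ?thesis unfolding gU_eq Dg
    using g01 P2 P4 tg unfolding h_def by auto
qed

end
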